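(* Let $N,M,m\in\mathbb{N}$ with $M\geq 3$, and let $p_1,\ldots,p_m\in[1,\infty]$. Let $A$ be a nonempty subset of $\{1,\ldots,m\}$ such that $p_j=\infty$ for every $j\in A$. Then for every $m$-linear form $T:\ell_{p_1}^N\times\cdots\times\ell_{p_m}^N\to\mathbb{C}$, $$\|T\|_{A,M}\leq\|T\|\leq r_M^{-|A|}\|T\|_{A,M},$$ where $|A|$ is the cardinality of $A$.
   Context: $\ell_p^N$ denotes $\mathbb{C}^N$ with the $\ell_p$ norm (sup norm if $p=\infty$), with closed unit ball $B_{\ell_p^N}$. $\|T\|=\sup\{|T(x^{(1)},\ldots,x^{(m)})|: x^{(i)}\in B_{\ell_{p_i}^N}, 1\le i\le m\}$. $T_M=\{\exp(2j\pi i/M): j=0,\ldots,M-1\}$ is the set of $M$th roots of unity and $T_M^N=T_M\times\cdots\times T_M\subset\mathbb{C}^N$. $\|T\|_{A,M}:=\sup\{|T(x^{(1)},\ldots,x^{(m)})|: x^{(i)}\in B_{\ell_{p_i}^N}\text{ for } i\notin A,\ x^{(j)}\in T_M^N \text{ for } j\in A\}$. $r_M=\left(\frac12+\frac12\cos\left(\frac{2\pi}{M}\right)\right)^{1/2}$. *)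

theory Defs
  imports "HOL-Analysis.Analysis" "HOL-Library.Extended_Real"
begin

text \<open>Vectors of C^N are modelled as functions nat => complex vanishing at indices >= N
  (coordinates 0..N-1). An m-tuple of vectors is a function nat => (nat => complex) whose
  entries at indices >= m are zero (arguments 0..m-1).\<close>

definition cvecs :: "nat \<Rightarrow> (nat \<Rightarrow> complex) set" where
  "cvecs N = {x. \<forall>k\<ge>N. x k = 0}"

definition tuples :: "nat \<Rightarrow> nat \<Rightarrow> (nat \<Rightarrow> nat \<Rightarrow> complex) set" where
  "tuples m N = {xs. (\<forall>i<m. xs i \<in> cvecs N) \<and> (\<forall>i\<ge>m. xs i = (\<lambda>_. 0))}"

definition lp_norm :: "ereal \<Rightarrow> nat \<Rightarrow> (nat \<Rightarrow> complex) \<Rightarrow> real" where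
  "lp_norm p N x = (if p = \<infinity> then Max (insert 0 ((\<lambda>k. cmod (x k)) ` {..<N}))
     else (\<Sum>k<N. cmod (x k) powr real_of_ereal p) powr (1 / real_of_ereal p))"

definition multilinear_form :: "nat \<Rightarrow> nat \<Rightarrow> ((nat \<Rightarrow> nat \<Rightarrow> complex) \<Rightarrow> complex) \<Rightarrow> bool" where
  "multilinear_form m N T \<longleftrightarrow>
     (\<forall>xs\<in>tuples m N. \<forall>i<m. \<forall>y\<in>cvecs N. \<forall>z\<in>cvecs N. \<forall>c::complex.
        T (xs(i := (\<lambda>k. y k + c * z k))) = T (xs(i := y)) + c * T (xs(i := z)))"

definition form_norm :: "nat \<Rightarrow> nat \<Rightarrow> (nat \<Rightarrow> ereal) \<Rightarrow> ((nat \<Rightarrow> nat \<Rightarrow> complex) \<Rightarrow> complex) \<Rightarrow> real" where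
  "form_norm m N p T = Sup {cmod (T xs) | xs. xs \<in> tuples m N \<and> (\<forall>i<m. lp_norm (p i) N (xs i) \<le> 1)}"

definition roots_unity :: "nat \<Rightarrow> complex set" where
  "roots_unity M = {exp (2 * of_nat j * complex_of_real pi * \<i> / of_nat M) | j. j < M}"

definition form_norm_AM :: "nat \<Rightarrow> nat \<Rightarrow> (nat \<Rightarrow> ereal) \<Rightarrow> nat set \<Rightarrow> nat \<Rightarrow>
    ((nat \<Rightarrow> nat \<Rightarrow> complex) \<Rightarrow> complex) \<Rightarrow> real" where
  "form_norm_AM m N p A M T = Sup {cmod (T xs) | xs. xs \<in> tuples m N \<and>
      (\<forall>i<m. i \<notin> A \<longrightarrow> lp_norm (p i) N (xs i) \<le> 1) \<and>
      (\<forall>j\<in>A. \<forall>k<N. xs j k \<in> roots_unity M)}"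

definition r_const :: "nat \<Rightarrow> real" where
  "r_const M = sqrt (1/2 + 1/2 * cos (2 * pi / real M))"

end

theory Submission
  imports Defs
begin

lemma r_const_eq: assumes "M \<ge> 3" shows "r_const M = cos (pi / real M)" "r_const M > 0"
proof -
  have M: "real M \<ge> 3" using assms by simp
  have lt: "pi / real M < pi / 2" using M pi_gt_zero by (simp add: field_simps)
  have pos: "cos (pi / real M) > 0"
  proof (rule cos_gt_zero_pi)
    have "0 < pi / real M" using M pi_gt_zero by simp
    then show "- (pi / 2) < pi / real M" using pi_gt_zero by linarith
  qed (use lt in auto)
  have "1/2 + 1/2 * cos (2 * pi / real M) = (cos (pi / real M))^2"
    using cos_double_cos[of "pi / real M"] by (simp add: field_simps)
  then show "r_const M = cos (pi / real M)" using pos unfolding r_const_def by simp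
  then show "r_const M > 0" using pos by simp
qed

lemma root_choice:
  assumes "M \<ge> 3"
  shows "\<exists>w\<in>roots_unity M. Re (a * w) \<ge> r_const M * cmod a"
proof -
  define th where "th = Arg a"
  define t where "t = - th * real M / (2*pi)"
  define j0 where "j0 = floor (t + 1/2)"
  have Mpos: "real M > 0" using assms by simp
  have j0a: "real_of_int j0 \<le> t + 1/2" "t + 1/2 < real_of_int j0 + 1" unfolding j0_def by linarith+
  define phi where "phi = th + 2 * pi * real_of_int j0 / real M"
  have phieq: "phi = (2*pi / real M) * (real_of_int j0 - t)"
    unfolding phi_def t_def using Mpos by (simp add: field_simps)
  have h12: "\<bar>real_of_int j0 - t\<bar> \<le> 1/2" using j0a by linarith
  have cpos: "\<bar>2*pi / real M\<bar> = 2*pi / real M" using Mpos pi_gt_zero by simp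
  have "\<bar>phi\<bar> \<le> (2*pi / real M) * (1/2)" unfolding phieq abs_mult cpos
    using Mpos pi_gt_zero h12 by (intro mult_left_mono) auto
  then have phib: "\<bar>phi\<bar> \<le> pi / real M" by simp
  have piM: "pi / real M \<le> pi" using assms pi_gt_zero by (simp add: divide_le_eq)
  have cosb: "cos (pi / real M) \<le> cos phi"
    using cos_mono_le_eq[of "pi / real M" "\<bar>phi\<bar>"] phib piM pi_gt_zero Mpos by simp
  define q where "q = j0 div int M"
  define j where "j = nat (j0 mod int M)"
  have jlt: "j < M" unfolding j_def using assms by (simp add: nat_less_iff)
  have jeq: "real_of_int j0 = real j + real M * real_of_int q"
  proof -
    have e1: "j0 = j0 mod int M + int M * q" unfolding q_def by (metis mult_div_mod_eq add.commute)
    have e2: "int j = j0 mod int M" unfolding j_def using assms by simp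
    have "j0 = int j + int M * q" using e1 e2 by presburger
    then have "real_of_int j0 = real_of_int (int j + int M * q)" by simp
    then show ?thesis by (simp only: of_int_add of_int_mult of_int_of_nat_eq)
  qed
  define w where "w = exp (2 * of_nat j * complex_of_real pi * \<i> / of_nat M)"
  have wr: "w \<in> roots_unity M" unfolding roots_unity_def w_def using jlt by blast
  have wcis: "w = cis (2 * pi * real j / real M)"
    unfolding w_def cis_conv_exp by (simp add: field_simps)
  have ang: "th + 2 * pi * real j / real M = phi + (2 * pi) * real_of_int (- q)"
  proof -
    have jj: "real j = real_of_int j0 - real M * real_of_int q" using jeq by simp
    show ?thesis unfolding phi_def jj using Mpos by (simp add: field_simps)
  qed
  have "a * w = rcis (cmod a) (th + 2 * pi * real j / real M)"
  proof -
    have "a * w = rcis (cmod a) th * cis (2 * pi * real j / real M)"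
      using rcis_cmod_Arg[of a] wcis th_def by simp
    also have "\<dots> = rcis (cmod a) (th + 2 * pi * real j / real M)"
      by (simp add: rcis_def cis_mult mult.assoc)
    finally show ?thesis .
  qed
  then have "Re (a * w) = cmod a * cos phi" unfolding ang
    by (simp only: Re_rcis cos_add cos_int_2pin sin_int_2pin) simp
  moreover have "cmod a * cos (pi / real M) \<le> cmod a * cos phi"
    using cosb by (simp add: mult_left_mono)
  ultimately show ?thesis using wr r_const_eq[OF assms] by (metis mult.commute)
qed

definition ev :: "nat \<Rightarrow> nat \<Rightarrow> complex" where "ev k = (\<lambda>l. if l = k then 1 else 0)"

lemma ev_cvecs: "k < N \<Longrightarrow> ev k \<in> cvecs N" unfolding ev_def cvecs_def by auto

lemma upd_tuples: "xs \<in> tuples m N \<Longrightarrow> i < m \<Longrightarrow> x \<in> cvecs N \<Longrightarrow> xs(i := x) \<in> tuples m N"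
  unfolding tuples_def by auto

lemma expand_aux:
  assumes T: "multilinear_form m N T" and xs: "xs \<in> tuples m N" and i: "i < m"
  shows "n \<le> N \<Longrightarrow> x \<in> cvecs n \<Longrightarrow> T (xs(i := x)) = (\<Sum>k<n. x k * T (xs(i := ev k)))"
proof (induction n arbitrary: x)
  case 0
  then have x0: "x = (\<lambda>_. 0)" unfolding cvecs_def by auto
  have z: "(\<lambda>_. 0::complex) \<in> cvecs N" unfolding cvecs_def by auto
  have L: "T (xs(i := (\<lambda>k. y k + c * w k))) = T (xs(i := y)) + c * T (xs(i := w))"
    if "y \<in> cvecs N" "w \<in> cvecs N" for y w c
    using T xs i that unfolding multilinear_form_def by blast
  have "T (xs(i := (\<lambda>k. (\<lambda>_. 0) k + 1 * (\<lambda>_. 0) k))) = T (xs(i := (\<lambda>_. 0))) + 1 * T (xs(i := (\<lambda>_. 0)))"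
    by (rule L[OF z z])
  then have "T (xs(i := (\<lambda>_. 0))) = 0" by simp
  then show ?case using x0 by (simp del: fun_upd_apply)
next
  case (Suc n)
  define x' where "x' = x(n := 0)"
  have x'c: "x' \<in> cvecs n" using Suc.prems unfolding x'_def cvecs_def by auto
  have x'N: "x' \<in> cvecs N" using Suc.prems unfolding x'_def cvecs_def by auto
  have en: "ev n \<in> cvecs N" using Suc.prems ev_cvecs by simp
  have xeq: "x = (\<lambda>k. x' k + x n * ev n k)" unfolding x'_def ev_def by auto
  have "T (xs(i := (\<lambda>k. x' k + x n * ev n k))) = T (xs(i := x')) + x n * T (xs(i := ev n))"
    using T xs i x'N en unfolding multilinear_form_def by blast
  also have "T (xs(i := x')) = (\<Sum>k<n. x' k * T (xs(i := ev k)))"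
    by (rule Suc.IH[OF Suc_leD[OF Suc.prems(1)] x'c])
  also have "(\<Sum>k<n. x' k * T (xs(i := ev k))) = (\<Sum>k<n. x k * T (xs(i := ev k)))"
    unfolding x'_def by (intro sum.cong) auto
  finally have F: "T (xs(i := (\<lambda>k. x' k + x n * ev n k))) = (\<Sum>k<n. x k * T (xs(i := ev k))) + x n * T (xs(i := ev n))" .
  show ?case unfolding sum.lessThan_Suc using F unfolding xeq[symmetric] .
qed

lemma expand:
  assumes T: "multilinear_form m N T" and xs: "xs \<in> tuples m N" and i: "i < m" and x: "x \<in> cvecs N"
  shows "T (xs(i := x)) = (\<Sum>k<N. x k * T (xs(i := ev k)))"
  using expand_aux[OF T xs i order_refl x] .

lemma lp_coord_le:
  assumes p: "1 \<le> p" and l: "lp_norm p N x \<le> 1" and k: "k < N"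
  shows "cmod (x k) \<le> 1"
proof (cases "p = \<infinity>")
  case True
  have "cmod (x k) \<le> Max (insert 0 ((\<lambda>k. cmod (x k)) ` {..<N}))"
    using k by (intro Max_ge) auto
  then show ?thesis using l True k unfolding lp_norm_def by simp
next
  case False
  define q where "q = real_of_ereal p"
  have q1: "q \<ge> 1" using p False unfolding q_def
    by (cases p) auto
  define s where "s = (\<Sum>k<N. cmod (x k) powr q)"
  have s0: "s \<ge> 0" unfolding s_def by (intro sum_nonneg) auto
  have "s powr (1/q) \<le> 1" using l False unfolding lp_norm_def s_def q_def by simp
  then have s1: "s \<le> 1" using q1 gr_one_powr[of s "1/q"] by fastforce
  have "cmod (x k) powr q \<le> s" unfolding s_def using k
    by (intro member_le_sum) auto
  then have "cmod (x k) powr q \<le> 1" using s1 by simp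
  then show ?thesis using q1 gr_one_powr[of "cmod (x k)" q] by fastforce
qed

lemma lp_inf_le:
  assumes "\<forall>k<N. cmod (x k) \<le> 1"
  shows "lp_norm \<infinity> N x \<le> 1"
  unfolding lp_norm_def using assms by (auto intro!: Max.boundedI)

lemma lp_zero: "lp_norm p N (\<lambda>_. 0) \<le> 1"
  unfolding lp_norm_def by auto

lemma roots_norm: "w \<in> roots_unity M \<Longrightarrow> cmod w = 1"
proof -
  assume "w \<in> roots_unity M"
  then obtain j where "w = exp (2 * of_nat j * complex_of_real pi * \<i> / of_nat M)"
    unfolding roots_unity_def by blast
  also have "\<dots> = cis (2 * real j * pi / real M)" unfolding cis_conv_exp by (simp add: field_simps)
  finally show ?thesis by simp
qed

lemma one_root: "M > 0 \<Longrightarrow> 1 \<in> roots_unity M"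
  unfolding roots_unity_def by (rule CollectI, rule exI[of _ 0]) auto


lemma cube_bound:
  assumes T: "multilinear_form m N T"
  shows "\<exists>C. \<forall>xs\<in>tuples m N. (\<forall>i<m. \<forall>k<N. cmod (xs i k) \<le> 1) \<longrightarrow> cmod (T xs) \<le> C"
proof -
  define E where "E = ev ` {..<N}"
  define BT where "BT = {xs. \<forall>i. (i \<in> {..<m} \<longrightarrow> xs i \<in> E) \<and> (i \<notin> {..<m} \<longrightarrow> xs i = (\<lambda>_. 0))}"
  have fin: "finite BT" unfolding BT_def E_def by (intro finite_set_of_finite_funs) auto
  define Bm where "Bm = Max (insert 0 ((\<lambda>xs. cmod (T xs)) ` BT))"
  have Bm0: "Bm \<ge> 0" unfolding Bm_def using fin by (intro Max_ge) auto
  have main: "d \<le> m \<Longrightarrow> \<forall>xs\<in>tuples m N. (\<forall>i<m. \<forall>k<N. cmod (xs i k) \<le> 1) \<longrightarrow>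
     (\<forall>i. d \<le> i \<longrightarrow> i < m \<longrightarrow> xs i \<in> E) \<longrightarrow> cmod (T xs) \<le> real N ^ d * Bm" for d
  proof (induction d)
    case 0
    show ?case
    proof (intro ballI impI)
      fix xs assume xs: "xs \<in> tuples m N" and "\<forall>i. 0 \<le> i \<longrightarrow> i < m \<longrightarrow> xs i \<in> E"
      then have "xs \<in> BT" unfolding BT_def tuples_def by auto
      then have "cmod (T xs) \<le> Bm" unfolding Bm_def using fin by (intro Max_ge) auto
      then show "cmod (T xs) \<le> real N ^ 0 * Bm" by simp
    qed
  next
    case (Suc d)
    show ?case
    proof (intro ballI impI)
      fix xs assume xs: "xs \<in> tuples m N" and cube: "\<forall>i<m. \<forall>k<N. cmod (xs i k) \<le> 1"
        and sl: "\<forall>i. Suc d \<le> i \<longrightarrow> i < m \<longrightarrow> xs i \<in> E"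
      have dm: "d < m" using Suc.prems by simp
      have xd: "xs d \<in> cvecs N" using xs dm unfolding tuples_def by auto
      have "T xs = T (xs(d := xs d))" by simp
      also have "\<dots> = (\<Sum>k<N. xs d k * T (xs(d := ev k)))" by (rule expand[OF T xs dm xd])
      finally have Te: "T xs = (\<Sum>k<N. xs d k * T (xs(d := ev k)))" .
      have each: "cmod (xs d k * T (xs(d := ev k))) \<le> real N ^ d * Bm" if k: "k < N" for k
      proof -
        have t1: "xs(d := ev k) \<in> tuples m N" using upd_tuples[OF xs dm ev_cvecs[OF k]] .
        have t2: "\<forall>i<m. \<forall>l<N. cmod ((xs(d := ev k)) i l) \<le> 1" using cube unfolding ev_def by auto
        have t3: "\<forall>i. d \<le> i \<longrightarrow> i < m \<longrightarrow> (xs(d := ev k)) i \<in> E" using sl k unfolding E_def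
          by (auto simp: le_Suc_eq)
        have b: "cmod (T (xs(d := ev k))) \<le> real N ^ d * Bm" using Suc.IH dm t1 t2 t3 by simp
        have "cmod (xs d k) \<le> 1" using cube dm k by simp
        then have "cmod (xs d k) * cmod (T (xs(d := ev k))) \<le> 1 * (real N ^ d * Bm)"
          using b by (intro mult_mono) auto
        then show ?thesis by (simp add: norm_mult)
      qed
      have "cmod (T xs) \<le> (\<Sum>k<N. cmod (xs d k * T (xs(d := ev k))))" unfolding Te by (rule norm_sum)
      also have "\<dots> \<le> (\<Sum>k<N. real N ^ d * Bm)" using each by (intro sum_mono) auto
      also have "\<dots> = real N ^ Suc d * Bm" by simp
      finally show "cmod (T xs) \<le> real N ^ Suc d * Bm" .
    qed
  qed
  show ?thesis using main[OF order_refl] by auto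
qed


theorem mainTheorem3:
  fixes N M m :: nat and p :: "nat \<Rightarrow> ereal" and A :: "nat set"
    and T :: "(nat \<Rightarrow> nat \<Rightarrow> complex) \<Rightarrow> complex"
  assumes "M \<ge> 3"
    and "\<forall>i<m. 1 \<le> p i"
    and "A \<noteq> {}" and "A \<subseteq> {..<m}"
    and "\<forall>j\<in>A. p j = \<infinity>"
    and "multilinear_form m N T"
  shows "form_norm_AM m N p A M T \<le> form_norm m N p T
       \<and> form_norm m N p T \<le> (1 / r_const M) ^ card A * form_norm_AM m N p A M T"
proof -
  note M3 = assms(1) and p1 = assms(2) and Asub = assms(4) and pA = assms(5) and T = assms(6)
  define BallS where "BallS = {cmod (T xs) | xs. xs \<in> tuples m N \<and> (\<forall>i<m. lp_norm (p i) N (xs i) \<le> 1)}"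
  define AMS where "AMS = {cmod (T xs) | xs. xs \<in> tuples m N \<and>
      (\<forall>i<m. i \<notin> A \<longrightarrow> lp_norm (p i) N (xs i) \<le> 1) \<and>
      (\<forall>j\<in>A. \<forall>k<N. xs j k \<in> roots_unity M)}"
  define r where "r = r_const M"
  define S where "S = Sup AMS"
  have rpos: "r > 0" unfolding r_def using r_const_eq[OF M3] by simp
  have finA: "finite A" using Asub finite_subset by blast
  have sub: "AMS \<subseteq> BallS"
  proof
    fix v assume "v \<in> AMS"
    then obtain xs where v: "v = cmod (T xs)" and xs: "xs \<in> tuples m N"
      and c1: "\<forall>i<m. i \<notin> A \<longrightarrow> lp_norm (p i) N (xs i) \<le> 1"
      and c2: "\<forall>j\<in>A. \<forall>k<N. xs j k \<in> roots_unity M" unfolding AMS_def by blast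
    have "\<forall>i<m. lp_norm (p i) N (xs i) \<le> 1"
    proof (intro allI impI)
      fix i assume i: "i < m"
      show "lp_norm (p i) N (xs i) \<le> 1"
      proof (cases "i \<in> A")
        case True
        have "\<forall>k<N. cmod (xs i k) \<le> 1" using c2 True roots_norm by fastforce
        then show ?thesis using pA True lp_inf_le by simp
      next
        case False then show ?thesis using c1 i by simp
      qed
    qed
    then show "v \<in> BallS" unfolding BallS_def using v xs by blast
  qed
  obtain C where C: "\<forall>xs\<in>tuples m N. (\<forall>i<m. \<forall>k<N. cmod (xs i k) \<le> 1) \<longrightarrow> cmod (T xs) \<le> C"
    using cube_bound[OF T] by blast
  have bdd: "bdd_above BallS"
  proof (rule bdd_aboveI)
    fix v assume "v \<in> BallS"
    then obtain xs where v: "v = cmod (T xs)" and xs: "xs \<in> tuples m N"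
      and c: "\<forall>i<m. lp_norm (p i) N (xs i) \<le> 1" unfolding BallS_def by blast
    have "\<forall>i<m. \<forall>k<N. cmod (xs i k) \<le> 1" using c p1 lp_coord_le by blast
    then show "v \<le> C" using C xs v by blast
  qed
  have bddAM: "bdd_above AMS" using bdd_above_mono[OF bdd sub] .
  define z where "z = (\<lambda>i. if i \<in> A then (\<lambda>k. if k < N then (1::complex) else 0) else (\<lambda>_. 0))"
  have z: "z \<in> tuples m N" unfolding z_def tuples_def cvecs_def using Asub by auto
  have "cmod (T z) \<in> AMS" unfolding AMS_def
  proof (intro CollectI exI conjI)
    show "\<forall>i<m. i \<notin> A \<longrightarrow> lp_norm (p i) N (z i) \<le> 1" unfolding z_def using lp_zero by simp
    show "\<forall>j\<in>A. \<forall>k<N. z j k \<in> roots_unity M" unfolding z_def using one_root M3 by simp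
  qed (use z in auto)
  then have ne: "AMS \<noteq> {}" by blast
  have ineq1: "Sup AMS \<le> Sup BallS" by (rule cSup_subset_mono[OF ne bdd sub])
  have Q: "B \<subseteq> A \<longrightarrow> (\<forall>xs\<in>tuples m N. (\<forall>i<m. i \<notin> A \<longrightarrow> lp_norm (p i) N (xs i) \<le> 1) \<longrightarrow>
      (\<forall>j\<in>A - B. \<forall>k<N. xs j k \<in> roots_unity M) \<longrightarrow> (\<forall>j\<in>B. \<forall>k<N. cmod (xs j k) \<le> 1) \<longrightarrow>
      r ^ card B * cmod (T xs) \<le> S)" if "finite B" for B
    using that
  proof (induction B rule: finite_induct)
    case empty
    show ?case
    proof (intro impI ballI)
      fix xs assume "xs \<in> tuples m N" "\<forall>i<m. i \<notin> A \<longrightarrow> lp_norm (p i) N (xs i) \<le> 1"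
        "\<forall>j\<in>A - {}. \<forall>k<N. xs j k \<in> roots_unity M"
      then have "cmod (T xs) \<in> AMS" unfolding AMS_def by auto
      then have "cmod (T xs) \<le> S" unfolding S_def using bddAM by (rule cSup_upper)
      then show "r ^ card {} * cmod (T xs) \<le> S" by simp
    qed
  next
    case (insert b B)
    show ?case
    proof (intro impI ballI)
      assume bB: "insert b B \<subseteq> A"
      fix xs assume xs: "xs \<in> tuples m N" and c1: "\<forall>i<m. i \<notin> A \<longrightarrow> lp_norm (p i) N (xs i) \<le> 1"
        and c2: "\<forall>j\<in>A - insert b B. \<forall>k<N. xs j k \<in> roots_unity M"
        and c3: "\<forall>j\<in>insert b B. \<forall>k<N. cmod (xs j k) \<le> 1"
      have bA: "b \<in> A" using bB by simp
      have bm: "b < m" using bA Asub by auto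
      define a where "a = (\<lambda>k. T (xs(b := ev k)))"
      have "\<forall>k. \<exists>w. w \<in> roots_unity M \<and> Re (a k * w) \<ge> r * cmod (a k)"
        using root_choice[OF M3] unfolding r_def by blast
      then obtain w where w: "\<And>k. w k \<in> roots_unity M" "\<And>k. Re (a k * w k) \<ge> r * cmod (a k)"
        by metis
      define y where "y = (\<lambda>k. if k < N then w k else 0)"
      have yc: "y \<in> cvecs N" unfolding y_def cvecs_def by auto
      define ys where "ys = xs(b := y)"
      have ys: "ys \<in> tuples m N" unfolding ys_def using upd_tuples[OF xs bm yc] .
      have IHr: "r ^ card B * cmod (T ys) \<le> S"
      proof -
        have d1: "\<forall>i<m. i \<notin> A \<longrightarrow> lp_norm (p i) N (ys i) \<le> 1" using c1 bA unfolding ys_def by auto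
        have d2: "\<forall>j\<in>A - B. \<forall>k<N. ys j k \<in> roots_unity M" using c2 w(1) unfolding ys_def y_def by auto
        have d3: "\<forall>j\<in>B. \<forall>k<N. cmod (ys j k) \<le> 1" using c3 insert.hyps(2) unfolding ys_def by auto
        show ?thesis using insert.IH bB ys d1 d2 d3 by blast
      qed
      have Tys: "T ys = (\<Sum>k<N. w k * a k)"
      proof -
        have "T ys = (\<Sum>k<N. y k * a k)" unfolding ys_def a_def by (rule expand[OF T xs bm yc])
        also have "\<dots> = (\<Sum>k<N. w k * a k)" unfolding y_def by (intro sum.cong) auto
        finally show ?thesis .
      qed
      have xb: "xs b \<in> cvecs N" using xs bm unfolding tuples_def by auto
      have Txs: "T xs = (\<Sum>k<N. xs b k * a k)"
      proof -
        have "T xs = T (xs(b := xs b))" by simp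
        also have "\<dots> = (\<Sum>k<N. xs b k * a k)" unfolding a_def by (rule expand[OF T xs bm xb])
        finally show ?thesis .
      qed
      have "cmod (T xs) \<le> (\<Sum>k<N. cmod (xs b k * a k))" unfolding Txs by (rule norm_sum)
      also have "\<dots> \<le> (\<Sum>k<N. cmod (a k))"
      proof (intro sum_mono)
        fix k assume "k \<in> {..<N}"
        then have "cmod (xs b k) \<le> 1" using c3 by simp
        then show "cmod (xs b k * a k) \<le> cmod (a k)" by (simp add: norm_mult mult_left_le_one_le)
      qed
      finally have h1: "r * cmod (T xs) \<le> r * (\<Sum>k<N. cmod (a k))" using rpos by simp
      have "r * (\<Sum>k<N. cmod (a k)) = (\<Sum>k<N. r * cmod (a k))" by (simp add: sum_distrib_left)
      also have "\<dots> \<le> (\<Sum>k<N. Re (a k * w k))" using w(2) by (intro sum_mono) auto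
      also have "\<dots> = Re (T ys)" unfolding Tys by (simp add: mult.commute)
      also have "\<dots> \<le> cmod (T ys)" by (rule complex_Re_le_cmod)
      finally have h2: "r * cmod (T xs) \<le> cmod (T ys)" using h1 by linarith
      have "r ^ card (insert b B) * cmod (T xs) = r ^ card B * (r * cmod (T xs))"
        using insert.hyps by simp
      also have "\<dots> \<le> r ^ card B * cmod (T ys)" using h2 rpos by (intro mult_left_mono) auto
      also have "\<dots> \<le> S" by (rule IHr)
      finally show "r ^ card (insert b B) * cmod (T xs) \<le> S" .
    qed
  qed
  have ineq2: "Sup BallS \<le> (1 / r) ^ card A * S"
  proof -
    obtain v0 where "v0 \<in> AMS" using ne by blast
    then have neB: "BallS \<noteq> {}" using sub by blast
    show ?thesis
    proof (rule cSup_least[OF neB])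
      fix v assume "v \<in> BallS"
      then obtain xs where v: "v = cmod (T xs)" and xs: "xs \<in> tuples m N"
        and c: "\<forall>i<m. lp_norm (p i) N (xs i) \<le> 1" unfolding BallS_def by blast
      have c3: "\<forall>j\<in>A. \<forall>k<N. cmod (xs j k) \<le> 1" using c p1 Asub lp_coord_le by blast
      have "r ^ card A * cmod (T xs) \<le> S" using Q[OF finA] xs c c3 by auto
      moreover have rp: "r ^ card A > 0" using rpos by simp
      ultimately have "cmod (T xs) \<le> S / r ^ card A" by (simp add: pos_le_divide_eq mult.commute)
      then show "v \<le> (1 / r) ^ card A * S" using v by (simp add: power_one_over)
    qed
  qed
  show ?thesis using ineq1 ineq2 unfolding form_norm_def form_norm_AM_def
    BallS_def[symmetric] AMS_def[symmetric] S_def r_def by simp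
qed

end
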